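(* Let $S$ be the family of $d$-dimensional cubes in $\mathbb{R}^d$ (of any orientation). For every bounded Borel set $C\subseteq\mathbb{R}^d$ there exists an $S$-continuous knife function on $C$ from $\emptyset$ to $C$.
   Context: A knife function on $C$ from $C_0$ to $C_1$ is a map $K$ from $[0,1]$ to Borel subsets of $C$ with $K(t)\subseteq K(t')$ for $t\le t'$, $K(0)=C_0$, $K(1)=C_1$; $\overline K(t):=C\setminus K(t)$. A piece $s$ is an $\epsilon$-predecessor of a piece $s'$ if $s\subseteq s'$ and $\mathrm{Lebesgue}(s'\setminus s)<\epsilon$. $K$ is $S$-continuous if for every $\epsilon>0$ there is $\delta>0$ such that for all $t,t'\in[0,1]$ with $|t'-t|<\delta$: (a) every $S$-piece $s_{t'}\subseteq K(t')$ has an $\epsilon$-predecessor $S$-piece $s_t\subseteq K(t)$; and (b) every $S$-piece $s_{t'}\subseteq\overline K(t')$ has an $\epsilon$-predecessor $S$-piece $s_t\subseteq\overline K(t)$. *)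

theory Defs
  imports "HOL-Analysis.Analysis"
begin

definition oriented_cube :: "'a::euclidean_space set \<Rightarrow> bool" where
  "oriented_cube Q \<longleftrightarrow> (\<exists>c a (f::'a \<Rightarrow> 'a). a > 0 \<and> orthogonal_transformation f \<and>
      Q = (\<lambda>x. c + f x) ` cbox 0 (\<Sum>b\<in>Basis. a *\<^sub>R b))"

definition cube_piece :: "'a::euclidean_space set \<Rightarrow> bool" where
  "cube_piece s \<longleftrightarrow> s = {} \<or> oriented_cube s"

definition eps_predecessor :: "real \<Rightarrow> 'a::euclidean_space set \<Rightarrow> 'a set \<Rightarrow> bool" where
  "eps_predecessor \<epsilon> s s' \<longleftrightarrow> s \<subseteq> s' \<and> measure lebesgue (s' - s) < \<epsilon>"

definition knife_function ::
  "'a::euclidean_space set \<Rightarrow> 'a set \<Rightarrow> 'a set \<Rightarrow> (real \<Rightarrow> 'a set) \<Rightarrow> bool" where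
  "knife_function C C0 C1 K \<longleftrightarrow>
     (\<forall>t\<in>{0..1}. K t \<in> sets borel \<and> K t \<subseteq> C) \<and>
     (\<forall>t\<in>{0..1}. \<forall>t'\<in>{0..1}. t \<le> t' \<longrightarrow> K t \<subseteq> K t') \<and>
     K 0 = C0 \<and> K 1 = C1"

definition S_continuous ::
  "('a::euclidean_space set \<Rightarrow> bool) \<Rightarrow> 'a set \<Rightarrow> (real \<Rightarrow> 'a set) \<Rightarrow> bool" where
  "S_continuous S C K \<longleftrightarrow>
     (\<forall>\<epsilon>>0. \<exists>\<delta>>0. \<forall>t\<in>{0..1}. \<forall>t'\<in>{0..1}. \<bar>t' - t\<bar> < \<delta> \<longrightarrow>
        (\<forall>s'. S s' \<and> s' \<subseteq> K t' \<longrightarrow> (\<exists>s. S s \<and> s \<subseteq> K t \<and> eps_predecessor \<epsilon> s s')) \<and>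
        (\<forall>s'. S s' \<and> s' \<subseteq> C - K t' \<longrightarrow> (\<exists>s. S s \<and> s \<subseteq> C - K t \<and> eps_predecessor \<epsilon> s s')))"

end

theory Submission
  imports Defs
begin

lemma one_inner_Basis:
  fixes i :: "'a::euclidean_space"
  assumes "i \<in> Basis" shows "(\<Sum>b\<in>Basis. b) \<bullet> i = 1"
  using assms by (simp add: inner_sum_left inner_Basis sum.delta if_distrib cong: if_cong)

lemma measure_cball_leb:
  fixes c :: "'a::euclidean_space"
  assumes "r \<ge> 0"
  shows "measure lebesgue (cball c r) = unit_ball_vol (DIM('a)) * r ^ DIM('a)"
proof -
  have "cball c r \<in> sets lborel" by simp
  then show ?thesis using content_cball[of r c] assms by simp
qed

lemma core:
  fixes s' :: "'a::euclidean_space set"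
  assumes cube: "oriented_cube s'" and sub: "s' \<subseteq> {z. z \<bullet> e \<le> h}" and e: "norm e = 1"
    and bd: "s' \<subseteq> cball 0 B" and eta: "\<eta> > 0"
  shows "\<exists>s. cube_piece s \<and> s \<subseteq> s' \<and> (\<forall>q\<in>s. q \<bullet> e < h - \<eta>) \<and>
     measure lebesgue (s' - s) \<le> 4 * real DIM('a) ^ (DIM('a) + 1) * (2*B) ^ (DIM('a) - 1)
        * unit_ball_vol (DIM('a)) * \<eta>"
proof -
  define n where "n = DIM('a)"
  define V where "V = unit_ball_vol (DIM('a))"
  define one where "one = (\<Sum>b\<in>Basis. b::'a)"
  have one_i: "one \<bullet> i = 1" if "i \<in> Basis" for i
    using one_inner_Basis[OF that] by (simp add: one_def)
  have n1: "n \<ge> 1" by (simp add: n_def DIM_positive Suc_leI)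
  have V0: "V \<ge> 0" by (simp add: V_def)
  obtain c a and f :: "'a \<Rightarrow> 'a" where a: "a > 0" and f: "orthogonal_transformation f"
    and s'eq: "s' = (\<lambda>x. c + f x) ` cbox 0 (\<Sum>b\<in>Basis. a *\<^sub>R b)"
    using cube unfolding oriented_cube_def by metis
  have sumeq: "(\<Sum>b\<in>Basis. r *\<^sub>R b) = r *\<^sub>R one" for r
    by (simp add: one_def scaleR_sum_right)
  define X where "X = cbox 0 (a *\<^sub>R one)"
  have s'X: "s' = (\<lambda>x. c + f x) ` X" using s'eq sumeq X_def by simp
  have memX: "x \<in> X \<longleftrightarrow> (\<forall>i\<in>Basis. 0 \<le> x \<bullet> i \<and> x \<bullet> i \<le> a)" for x
    by (auto simp: X_def mem_box one_i)
  have lin: "linear f" using f orthogonal_transformation_linear by blast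
  have fnorm: "norm (f x) = norm x" for x using f orthogonal_transformation_norm by blast
  have cont: "continuous_on UNIV (\<lambda>x. c + f x)"
    using lin by (intro continuous_intros) (simp add: linear_continuous_on linear_conv_bounded_linear)
  have s'meas: "s' \<in> lmeasurable"
    unfolding s'X X_def
    by (rule lmeasurable_compact, rule compact_continuous_image) (auto intro: continuous_on_subset[OF cont])
  obtain b0 :: 'a where b0: "b0 \<in> Basis" using nonempty_Basis by blast
  have aB: "a \<le> 2 * B"
  proof -
    have "0 \<in> X" using a by (simp add: memX)
    then have "c \<in> s'" using s'X f by (force simp: linear_0[OF lin])
    moreover have "a *\<^sub>R b0 \<in> X" using a b0 by (auto simp: memX inner_Basis)
    then have "c + f (a *\<^sub>R b0) \<in> s'" using s'X by blast
    ultimately have "norm c \<le> B" "norm (c + f (a *\<^sub>R b0)) \<le> B" using bd by auto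
    moreover have "norm (f (a *\<^sub>R b0)) = a" using fnorm b0 a by simp
    moreover have "norm (f (a *\<^sub>R b0)) \<le> norm (c + f (a *\<^sub>R b0)) + norm c"
      by (metis add_diff_cancel_left' norm_triangle_ineq4)
    ultimately show ?thesis by linarith
  qed
  have m'bd: "measure lebesgue s' \<le> real n ^ n * a ^ n * V"
  proof -
    have "s' \<subseteq> cball c (real n * a)"
    proof
      fix y assume "y \<in> s'"
      then obtain x where x: "x \<in> X" "y = c + f x" using s'X by blast
      have "norm x \<le> (\<Sum>b\<in>Basis. \<bar>x \<bullet> b\<bar>)" by (rule norm_le_l1)
      also have "\<dots> \<le> (\<Sum>b\<in>(Basis::'a set). a)" proof (rule sum_mono)
        fix i :: 'a assume "i \<in> Basis" then show "\<bar>x \<bullet> i\<bar> \<le> a" using x(1) by (auto simp: memX)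
      qed
      also have "\<dots> = real n * a" by (simp add: n_def)
      finally show "y \<in> cball c (real n * a)" using x fnorm by (simp add: dist_norm)
    qed
    then have "measure lebesgue s' \<le> measure lebesgue (cball c (real n * a))"
      by (intro measure_mono_fmeasurable) (auto simp: s'meas fmeasurableD)
    also have "\<dots> = V * (real n * a) ^ n" using measure_cball_leb[of "real n * a" c] a unfolding V_def n_def by (simp add: mult.commute)
    finally show ?thesis by (simp add: power_mult_distrib mult_ac)
  qed

  have cs': "compact s'"
    unfolding s'X X_def
    by (rule compact_continuous_image) (auto intro: continuous_on_subset[OF cont])
  have m'0: "measure lebesgue s' \<ge> 0" by simp
  have mono4: "x*y*z*w \<le> x'*y'*z'*w" if "0\<le>x" "x\<le>x'" "0\<le>y" "y\<le>y'" "0\<le>z" "z\<le>z'" "0\<le>w"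
    for x y z w x' y' z' :: real
    using that by (intro mult_right_mono mult_mono) (auto intro: mult_nonneg_nonneg order_trans)
  have B0: "0 \<le> 2 * B" using aB a by linarith
  have apow: "a ^ n = a ^ (n-1) * a" using n1 by (cases n) (auto simp: mult.commute)
  have apowB: "a ^ (n-1) \<le> (2*B) ^ (n-1)" using aB a by (intro power_mono) auto
  have npow: "real n ^ n \<le> real n ^ (n+1)" using n1 by (intro power_increasing) auto
  define M where "M = 4 * real n ^ (n + 1) * (2*B) ^ (n - 1) * V * \<eta>"
  have "\<exists>s. cube_piece s \<and> s \<subseteq> s' \<and> (\<forall>q\<in>s. q \<bullet> e < h - \<eta>) \<and> measure lebesgue (s' - s) \<le> M"
  proof (cases "a \<le> 4*\<eta>")
    case True
    show ?thesis
    proof (intro exI conjI)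
      show "cube_piece {}" by (simp add: cube_piece_def)
      show "{} \<subseteq> s'" by simp
      show "\<forall>q\<in>{}. q \<bullet> e < h - \<eta>" by simp
      have "measure lebesgue (s' - {}) \<le> real n ^ n * a ^ n * V" using m'bd by simp
      also have "\<dots> = real n ^ n * a ^ (n-1) * a * V" by (simp add: apow)
      also have "\<dots> \<le> real n ^ (n+1) * (2*B) ^ (n-1) * (4*\<eta>) * V"
        using True a V0 npow apowB by (intro mono4) auto
      also have "\<dots> = M" by (simp add: M_def mult_ac)
      finally show "measure lebesgue (s' - {}) \<le> M" .
    qed
  next
    case False
    define l where "l = 1 - 4*\<eta>/a"
    have l: "0 < l" "l < 1" using False a eta by (auto simp: l_def field_simps)
    have la: "(1 - l) * a = 4 * \<eta>" using a by (simp add: l_def field_simps)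
    define p where "p = c + f ((a/2) *\<^sub>R one)"
    define g where "g y = l *\<^sub>R y + (1-l) *\<^sub>R p" for y
    define s where "s = g ` s'"
    have fadd: "f (x + y) = f x + f y" for x y using lin by (simp add: linear_add)
    have fscale: "f (r *\<^sub>R x) = r *\<^sub>R f x" for r x using lin by (simp add: linear_cmul)
    have gform: "g (c + f x) = c + f (l *\<^sub>R x + (1-l) *\<^sub>R ((a/2) *\<^sub>R one))" for x
      by (simp add: g_def p_def fadd fscale algebra_simps)
    have sub1: "s \<subseteq> s'"
    proof
      fix q assume "q \<in> s"
      then obtain x where x: "x \<in> X" "q = g (c + f x)" using s_def s'X by blast
      have "l *\<^sub>R x + (1-l) *\<^sub>R ((a/2) *\<^sub>R one) \<in> X"
        unfolding memX
      proof
        fix i :: 'a assume i: "i \<in> Basis"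
        have xi: "0 \<le> x \<bullet> i" "x \<bullet> i \<le> a" using x(1) i by (auto simp: memX)
        have "l * (x \<bullet> i) \<le> l * a" using xi l by (intro mult_left_mono) auto
        moreover have "0 \<le> l * (x \<bullet> i)" using xi l by simp
        moreover have "0 \<le> (1-l) * (a/2)" using l a by simp
        moreover have "(1-l) * (a/2) \<le> (1-l) * a" using l a by (intro mult_left_mono) auto
        ultimately show "0 \<le> (l *\<^sub>R x + (1-l) *\<^sub>R ((a/2) *\<^sub>R one)) \<bullet> i \<and>
            (l *\<^sub>R x + (1-l) *\<^sub>R ((a/2) *\<^sub>R one)) \<bullet> i \<le> a"
          using i by (simp add: inner_add_left one_i algebra_simps)
      qed
      then show "q \<in> s'" using x gform s'X by auto
    qed
    have cs: "compact s" unfolding s_def g_def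
      by (rule compact_continuous_image[OF _ cs']) (intro continuous_intros)
    have ms: "measure lebesgue s = l ^ n * measure lebesgue s'"
      using measure_lebesgue_affine[of l "(1-l) *\<^sub>R p" s'] l
      by (simp add: s_def g_def n_def)
    have loss: "measure lebesgue (s' - s) = (1 - l ^ n) * measure lebesgue s'"
      using measurable_measure_Diff[of s' lebesgue s] s'meas lmeasurable_compact[OF cs] sub1 ms
      by (simp add: fmeasurableD algebra_simps)
    have bern: "1 - l ^ n \<le> real n * (1 - l)"
      using Bernoulli_inequality[of "l - 1" n] l by (simp add: algebra_simps)
    have "measure lebesgue (s' - s) \<le> real n * (1 - l) * measure lebesgue s'"
      unfolding loss using bern m'0 by (rule mult_right_mono)
    also have "\<dots> \<le> real n * (1 - l) * (real n ^ n * a ^ n * V)"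
      using l m'bd by (intro mult_left_mono) auto
    also have "\<dots> = real n ^ (n+1) * a ^ (n-1) * ((1-l) * a) * V"
      by (simp add: apow mult_ac)
    also have "\<dots> \<le> real n ^ (n+1) * (2*B) ^ (n-1) * ((1-l) * a) * V"
      using la eta a V0 apowB by (intro mono4) auto
    also have "\<dots> = M" unfolding la M_def by (simp add: mult_ac)
    finally have lossM: "measure lebesgue (s' - s) \<le> M" .
    obtain u where u: "f u = e" using orthogonal_transformation_surj[OF f] by (metis surj_def)
    have nu: "norm u = 1" using fnorm u e by metis
    have "(a/2) *\<^sub>R one + (a/2) *\<^sub>R u \<in> X"
      unfolding memX
    proof
      fix i :: 'a assume i: "i \<in> Basis"
      have "\<bar>u \<bullet> i\<bar> \<le> 1" using Basis_le_norm[OF i, of u] nu by simp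
      then have "0 \<le> (a/2) * (1 + u \<bullet> i)" "(a/2) * (1 + u \<bullet> i) \<le> (a/2) * 2"
        using a by (intro mult_nonneg_nonneg mult_left_mono; auto)+
      then show "0 \<le> ((a/2) *\<^sub>R one + (a/2) *\<^sub>R u) \<bullet> i \<and> ((a/2) *\<^sub>R one + (a/2) *\<^sub>R u) \<bullet> i \<le> a"
        using i by (simp add: inner_add_left one_i algebra_simps)
    qed
    then have "p + (a/2) *\<^sub>R e \<in> s'"
      using s'X by (force simp: p_def fadd fscale u add.assoc)
    then have "(p + (a/2) *\<^sub>R e) \<bullet> e \<le> h" using sub by auto
    moreover have "e \<bullet> e = 1" using e by (simp add: power2_norm_eq_inner[symmetric])
    ultimately have pe: "p \<bullet> e \<le> h - a/2" by (simp add: inner_add_left)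
    have bound: "\<forall>q\<in>s. q \<bullet> e < h - \<eta>"
    proof
      fix q assume "q \<in> s"
      then obtain y where y: "y \<in> s'" "q = g y" using s_def by blast
      have ye: "y \<bullet> e \<le> h" using y sub by auto
      have "q \<bullet> e = l * (y \<bullet> e) + (1-l) * (p \<bullet> e)" using y by (simp add: g_def inner_add_left)
      also have "\<dots> \<le> l * h + (1-l) * (h - a/2)"
        using l ye pe by (intro add_mono mult_left_mono) auto
      also have "\<dots> = h - ((1-l)*a)/2" by (simp add: algebra_simps)
      finally show "q \<bullet> e < h - \<eta>" using la eta by simp
    qed
    have "oriented_cube s"
    proof -
      define c2 where "c2 = l *\<^sub>R c + (1-l) *\<^sub>R p"
      have "s = (\<lambda>x. c2 + f x) ` ((\<lambda>x. l *\<^sub>R x) ` X)"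
        unfolding s_def s'X image_image
        by (rule image_cong) (simp_all add: g_def c2_def fscale algebra_simps)
      also have "(\<lambda>x. l *\<^sub>R x) ` X = cbox 0 (\<Sum>b\<in>Basis. (l*a) *\<^sub>R b)"
      proof -
        have "0 \<in> X" using a by (simp add: memX)
        then have "X \<noteq> {}" by blast
        then show ?thesis using l unfolding X_def sumeq
          by (subst image_smult_cbox) auto
      qed
      finally show ?thesis unfolding oriented_cube_def using l a f
        by (intro exI[of _ c2] exI[of _ "l*a"] exI[of _ f]) auto
    qed
    then show ?thesis using sub1 bound lossM by (auto simp: cube_piece_def)
  qed
  then show ?thesis by (simp add: M_def n_def V_def)
qed

theorem mainTheorem18:
  fixes C :: "'a::euclidean_space set"
  assumes "C \<in> sets borel" and "bounded C"
  shows "\<exists>K. knife_function C {} C K \<and> S_continuous cube_piece C K"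
proof -
  obtain B where B: "B > 0" "\<forall>x\<in>C. norm x \<le> B" using assms(2) bounded_pos by blast
  have Cb: "C \<subseteq> cball 0 B" using B by auto
  obtain e :: 'a where eB: "e \<in> Basis" using nonempty_Basis by blast
  have e: "norm e = 1" using eB by simp
  have ce: "\<bar>x \<bullet> e\<bar> \<le> B" if "x \<in> C" for x
    using Basis_le_norm[OF eB, of x] B that by force
  define L where "L = B + 1"
  have L: "L > 0" using B by (simp add: L_def)
  define ht where "ht t = L * (2*t - 1)" for t
  define K where "K t = C \<inter> {x. x \<bullet> e \<le> ht t}" for t
  define Mc where "Mc = 4 * real DIM('a) ^ (DIM('a) + 1) * (2*B) ^ (DIM('a) - 1)
        * unit_ball_vol (DIM('a))"
  have Mc0: "Mc \<ge> 0" using B by (simp add: Mc_def)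
  define M1 where "M1 = Mc + 1"
  have M1: "M1 > 0" using Mc0 by (simp add: M1_def)
  have knife: "knife_function C {} C K"
    unfolding knife_function_def
  proof (intro conjI ballI impI)
    fix t :: real
    have "closed {x. x \<bullet> e \<le> ht t}"
      using closed_halfspace_le[of e "ht t"] by (simp add: inner_commute)
    then show "K t \<in> sets borel" unfolding K_def using assms(1) by auto
    show "K t \<subseteq> C" by (auto simp: K_def)
  next
    fix t t' :: real assume "t \<le> t'"
    then have "ht t \<le> ht t'" using L by (simp add: ht_def)
    then show "K t \<subseteq> K t'" by (auto simp: K_def)
  next
    show "K 0 = {}" using ce by (force simp: K_def ht_def L_def)
    show "K 1 = C" using ce by (force simp: K_def ht_def L_def)
  qed
  have cont: "S_continuous cube_piece C K"
    unfolding S_continuous_def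
  proof (intro allI impI)
    fix \<epsilon> :: real assume eps: "\<epsilon> > 0"
    define \<delta> where "\<delta> = \<epsilon> / (2 * L * M1)"
    have d: "\<delta> > 0" using eps L M1 by (simp add: \<delta>_def)
    have small: "Mc * (2 * L * \<bar>t' - t\<bar>) < \<epsilon>" if "\<bar>t' - t\<bar> < \<delta>" for t t' :: real
    proof -
      have "Mc * (2 * L * \<bar>t' - t\<bar>) \<le> M1 * (2 * L * \<bar>t' - t\<bar>)"
        using L by (intro mult_right_mono) (auto simp: M1_def)
      also have "\<dots> < M1 * (2 * L * \<delta>)" using that L M1 by simp
      also have "\<dots> = \<epsilon>" using L M1 by (simp add: \<delta>_def)
      finally show ?thesis .
    qed
    show "\<exists>\<delta>>0. \<forall>t\<in>{0..1}. \<forall>t'\<in>{0..1}. \<bar>t' - t\<bar> < \<delta> \<longrightarrow>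
        (\<forall>s'. cube_piece s' \<and> s' \<subseteq> K t' \<longrightarrow> (\<exists>s. cube_piece s \<and> s \<subseteq> K t \<and> eps_predecessor \<epsilon> s s')) \<and>
        (\<forall>s'. cube_piece s' \<and> s' \<subseteq> C - K t' \<longrightarrow> (\<exists>s. cube_piece s \<and> s \<subseteq> C - K t \<and> eps_predecessor \<epsilon> s s'))"
    proof (intro exI[of _ \<delta>] conjI d ballI impI allI)
      fix t t' s' assume tt: "\<bar>t' - t\<bar> < \<delta>" and s': "cube_piece s' \<and> s' \<subseteq> K t'"
      show "\<exists>s. cube_piece s \<and> s \<subseteq> K t \<and> eps_predecessor \<epsilon> s s'"
      proof (cases "s' = {} \<or> t' \<le> t")
        case True
        then have "s' \<subseteq> K t"
        proof
          assume "t' \<le> t"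
          then have "ht t' \<le> ht t" using L by (simp add: ht_def)
          then show ?thesis using s' by (auto simp: K_def)
        qed simp
        then show ?thesis using s' eps by (auto simp: eps_predecessor_def)
      next
        case False
        then have cube: "oriented_cube s'" and tlt: "t < t'" using s' by (auto simp: cube_piece_def)
        have eta: "ht t' - ht t = 2 * L * \<bar>t' - t\<bar>" "2 * L * \<bar>t' - t\<bar> > 0"
          using tlt L by (auto simp: ht_def algebra_simps)
        have "s' \<subseteq> {z. z \<bullet> e \<le> ht t'}" "s' \<subseteq> cball 0 B" using s' Cb by (auto simp: K_def)
        from core[OF cube this(1) e this(2) eta(2)] obtain s where
          s: "cube_piece s" "s \<subseteq> s'" "\<forall>q\<in>s. q \<bullet> e < ht t' - 2 * L * \<bar>t' - t\<bar>"
             "measure lebesgue (s' - s) \<le> Mc * (2 * L * \<bar>t' - t\<bar>)"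
          unfolding Mc_def by (auto simp: mult_ac)
        have "s \<subseteq> K t" using s(2,3) s' eta(1) by (force simp: K_def)
        moreover have "measure lebesgue (s' - s) < \<epsilon>" using s(4) small[OF tt] by linarith
        ultimately show ?thesis using s by (auto simp: eps_predecessor_def)
      qed
    next
      fix t t' s' assume tt: "\<bar>t' - t\<bar> < \<delta>" and s': "cube_piece s' \<and> s' \<subseteq> C - K t'"
      show "\<exists>s. cube_piece s \<and> s \<subseteq> C - K t \<and> eps_predecessor \<epsilon> s s'"
      proof (cases "s' = {} \<or> t \<le> t'")
        case True
        then have "s' \<subseteq> C - K t"
        proof
          assume "t \<le> t'"
          then have "ht t \<le> ht t'" using L by (simp add: ht_def)
          then show ?thesis using s' by (auto simp: K_def)
        qed simp
        then show ?thesis using s' eps by (auto simp: eps_predecessor_def)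
      next
        case False
        then have cube: "oriented_cube s'" and tlt: "t' < t" using s' by (auto simp: cube_piece_def)
        have eta: "ht t - ht t' = 2 * L * \<bar>t' - t\<bar>" "2 * L * \<bar>t' - t\<bar> > 0"
          using tlt L by (auto simp: ht_def algebra_simps)
        have e': "norm (-e) = 1" using e by simp
        have "s' \<subseteq> {z. z \<bullet> (-e) \<le> - ht t'}" "s' \<subseteq> cball 0 B" using s' Cb by (auto simp: K_def)
        from core[OF cube this(1) e' this(2) eta(2)] obtain s where
          s: "cube_piece s" "s \<subseteq> s'" "\<forall>q\<in>s. q \<bullet> (-e) < - ht t' - 2 * L * \<bar>t' - t\<bar>"
             "measure lebesgue (s' - s) \<le> Mc * (2 * L * \<bar>t' - t\<bar>)"
          unfolding Mc_def by (auto simp: mult_ac)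
        have "s \<subseteq> C - K t" using s(2,3) s' eta(1) by (force simp: K_def)
        moreover have "measure lebesgue (s' - s) < \<epsilon>" using s(4) small[OF tt] by linarith
        ultimately show ?thesis using s by (auto simp: eps_predecessor_def)
      qed
    qed
  qed
  show ?thesis using knife cont by blast
qed

end
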